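(* Assume the Green's functions $G_P[2T]$, $G_N[T]$, $G_D[T]$ exist. 1. If $G_P[2T]\ge0$ on $J\times J$, then $G_N[T](t,s)\ge|G_D[T](t,s)|$ for all $(t,s)\in I\times I$. 2. If $G_P[2T]\le0$ on $J\times J$, then $G_N[T](t,s)\le-|G_D[T](t,s)|$ for all $(t,s)\in I\times I$.
   Context: Fix $n\ge 1$, $T>0$, $I=[0,T]$, $J=[0,2T]$. $W^{2n,1}(K)$: $u\in C^{2n-1}(K)$ with $u^{(2n-1)}$ absolutely continuous. Let $a_0,\dots,a_{2n-1}\in L^\alpha(I)$, $\alpha\ge1$, $Lu=u^{(2n)}+\sum_{k=0}^{2n-1}a_ku^{(k)}$ on $I$. $\widetilde L u=u^{(2n)}+\sum_{k=0}^{n-1}(\hat a_{2k+1}u^{(2k+1)}+\tilde a_{2k}u^{(2k)})$ on $J$, where $\tilde a_{2k}=a_{2k}$, $\hat a_{2k+1}=a_{2k+1}$ on $I$, and $\tilde a_{2k}(t)=a_{2k}(2T-t)$, $\hat a_{2k+1}(t)=-a_{2k+1}(2T-t)$ for $t\in(T,2T]$. An operator $M$ is nonresonant in $X$ if $Mu=0$ a.e., $u\in X$ forces $u\equiv0$; its Green's function $G$ then gives the unique solution $u(t)=\int G(t,s)\sigma(s)ds$ of $Mu=\sigma$, $u\in X$. $G_N[T]$, $G_D[T]$: Green's functions of $L$ on $\{u\in W^{2n,1}(I): u^{(2k+1)}(0)=u^{(2k+1)}(T)=0,\ k=0,\dots,n-1\}$ and $\{u\in W^{2n,1}(I): u^{(2k)}(0)=u^{(2k)}(T)=0,\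 k=0,\dots,n-1\}$. $G_P[2T]$: Green's function of $\widetilde L$ on $\{u\in W^{2n,1}(J): u^{(k)}(0)=u^{(k)}(2T),\ k=0,\dots,2n-1\}$. *)

theory Defs
  imports "HOL-Analysis.Analysis"
begin

text \<open>A function u belongs to W^{2n,1}([a,b]) with derivative family D
  (D 0 = u, D k = u^(k)) when D k has derivative D (k+1) (one-sided at endpoints) for
  k < 2n-1, and D (2n-1) is absolutely continuous, i.e. it is the indefinite Lebesgue integral
  of the integrable function D (2n), which is then u^(2n) almost everywhere.\<close>

definition W2n1 :: "nat \<Rightarrow> real \<Rightarrow> real \<Rightarrow> (nat \<Rightarrow> real \<Rightarrow> real) \<Rightarrow> bool" where
  "W2n1 n a b D \<longleftrightarrow>
     (\<forall>k < 2*n - 1. \<forall>t\<in>{a..b}. (D k has_real_derivative D (Suc k) t) (at t within {a..b})) \<and>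
     integrable (lebesgue_on {a..b}) (D (2*n)) \<and>
     (\<forall>t\<in>{a..b}. D (2*n - 1) t = D (2*n - 1) a + integral\<^sup>L (lebesgue_on {a..t}) (D (2*n)))"

definition Lp_on :: "real \<Rightarrow> real \<Rightarrow> real \<Rightarrow> (real \<Rightarrow> real) \<Rightarrow> bool" where
  "Lp_on p a b f \<longleftrightarrow> f \<in> borel_measurable (lebesgue_on {a..b}) \<and>
     integrable (lebesgue_on {a..b}) (\<lambda>t. \<bar>f t\<bar> powr p)"

definition solves :: "nat \<Rightarrow> real \<Rightarrow> real \<Rightarrow> (nat \<Rightarrow> real \<Rightarrow> real) \<Rightarrow>
    ((nat \<Rightarrow> real \<Rightarrow> real) \<Rightarrow> bool) \<Rightarrow> (real \<Rightarrow> real) \<Rightarrow> (real \<Rightarrow> real) \<Rightarrow> bool" where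
  "solves n a b c BC u \<sigma> \<longleftrightarrow>
     (\<exists>D. (\<forall>t\<in>{a..b}. D 0 t = u t) \<and> W2n1 n a b D \<and> BC D \<and>
        (AE t in lebesgue_on {a..b}. D (2*n) t + (\<Sum>k<2*n. c k t * D k t) = \<sigma> t))"

definition nonresonant :: "nat \<Rightarrow> real \<Rightarrow> real \<Rightarrow> (nat \<Rightarrow> real \<Rightarrow> real) \<Rightarrow>
    ((nat \<Rightarrow> real \<Rightarrow> real) \<Rightarrow> bool) \<Rightarrow> bool" where
  "nonresonant n a b c BC \<longleftrightarrow>
     (\<forall>u. solves n a b c BC u (\<lambda>_. 0) \<longrightarrow> (\<forall>t\<in>{a..b}. u t = 0))"

text \<open>G is the Green's function of M on X: M is nonresonant in X, G is continuous on the
  square (as Green's functions of problems of order 2n >= 2 are), and for every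
  sigma in L^1 the function t \<mapsto> \<integral> G(t,s) sigma(s) ds solves M u = sigma, u \<in> X.\<close>
definition green :: "nat \<Rightarrow> real \<Rightarrow> real \<Rightarrow> (nat \<Rightarrow> real \<Rightarrow> real) \<Rightarrow>
    ((nat \<Rightarrow> real \<Rightarrow> real) \<Rightarrow> bool) \<Rightarrow> (real \<Rightarrow> real \<Rightarrow> real) \<Rightarrow> bool" where
  "green n a b c BC G \<longleftrightarrow>
     nonresonant n a b c BC \<and>
     continuous_on ({a..b} \<times> {a..b}) (\<lambda>(t, s). G t s) \<and>
     (\<forall>\<sigma>. integrable (lebesgue_on {a..b}) \<sigma> \<longrightarrow>
        solves n a b c BC (\<lambda>t. integral\<^sup>L (lebesgue_on {a..b}) (\<lambda>s. G t s * \<sigma> s)) \<sigma>)"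

definition BC_N :: "nat \<Rightarrow> real \<Rightarrow> (nat \<Rightarrow> real \<Rightarrow> real) \<Rightarrow> bool" where
  "BC_N n T D \<longleftrightarrow> (\<forall>k<n. D (2*k+1) 0 = 0 \<and> D (2*k+1) T = 0)"

definition BC_D :: "nat \<Rightarrow> real \<Rightarrow> (nat \<Rightarrow> real \<Rightarrow> real) \<Rightarrow> bool" where
  "BC_D n T D \<longleftrightarrow> (\<forall>k<n. D (2*k) 0 = 0 \<and> D (2*k) T = 0)"

definition BC_P :: "nat \<Rightarrow> real \<Rightarrow> (nat \<Rightarrow> real \<Rightarrow> real) \<Rightarrow> bool" where
  "BC_P n T D \<longleftrightarrow> (\<forall>k<2*n. D k 0 = D k T)"

definition ext_coef :: "real \<Rightarrow> (nat \<Rightarrow> real \<Rightarrow> real) \<Rightarrow> nat \<Rightarrow> real \<Rightarrow> real" where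
  "ext_coef T a k t = (if t \<le> T then a k t
                       else if even k then a k (2*T - t) else - a k (2*T - t))"

end

theory Submission
  imports Defs
begin


lemma int_iff_abs:
  fixes f :: "real \<Rightarrow> real"
  assumes "S \<in> sets lebesgue"
  shows "integrable (lebesgue_on S) f \<longleftrightarrow> f absolutely_integrable_on S"
  using assms by (simp add: set_integrable_def integrable_restrict_space)

lemma hbi_reflect:
  fixes f :: "real \<Rightarrow> real"
  assumes "has_bochner_integral (lebesgue_on {a..b}) f i"
  shows "has_bochner_integral (lebesgue_on {r-b..r-a}) (\<lambda>x. f(r-x)) i"
proof -
  have eq: "(\<lambda>x. indicat_real {a..b} (r - x) * f (r - x)) = (\<lambda>x. indicat_real {r-b..r-a} x * f(r-x))"
    by (auto simp: indicator_def fun_eq_iff)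
  have i: "has_bochner_integral lebesgue (\<lambda>x. indicator {a..b} x *\<^sub>R f x) i"
    using assms by (auto simp: has_bochner_integral_restrict_space)
  then have "has_bochner_integral lebesgue (\<lambda>x. indicat_real {a..b} (r - x) * f (r - x)) i"
    using has_bochner_integral_lebesgue_real_affine_iff [of "-1" "(\<lambda>x. indicator {a..b} x *\<^sub>R f x)" i r]
    by auto
  then have "has_bochner_integral lebesgue (\<lambda>x. indicat_real {r-b..r-a} x * f(r-x)) i"
    by (simp add: eq)
  then show ?thesis
    by (auto simp: has_bochner_integral_restrict_space)
qed

lemma integrable_reflect_r:
  fixes f :: "real \<Rightarrow> real"
  assumes "integrable (lebesgue_on {a..b}) f"
  shows "integrable (lebesgue_on {r-b..r-a}) (\<lambda>x. f(r-x))"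
  using hbi_reflect assms by (metis has_bochner_integral_iff)

lemma integral_reflect_r:
  fixes f :: "real \<Rightarrow> real"
  shows "integral\<^sup>L (lebesgue_on {r-b..r-a}) (\<lambda>x. f(r-x)) = integral\<^sup>L (lebesgue_on {a..b}) f"
proof (cases "integrable (lebesgue_on {a..b}) f")
  case True
  then show ?thesis using hbi_reflect by (metis has_bochner_integral_iff)
next
  case False
  have "\<not> integrable (lebesgue_on {r-b..r-a}) (\<lambda>x. f(r-x))"
  proof
    assume "integrable (lebesgue_on {r-b..r-a}) (\<lambda>x. f(r-x))"
    from integrable_reflect_r[OF this, of r] show False using False by simp
  qed
  then show ?thesis using False by (simp add: not_integrable_integral_eq)
qed

lemma ae_iff_negl:
  assumes "S \<in> sets lebesgue"
  shows "(AE x in lebesgue_on S. P x) \<longleftrightarrow> (\<exists>N. negligible N \<and> {x\<in>S. \<not> P x} \<subseteq> N)"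
proof
  assume "AE x in lebesgue_on S. P x"
  then obtain N where "N \<in> null_sets (lebesgue_on S)" "{x \<in> space (lebesgue_on S). \<not> P x} \<subseteq> N"
    by (auto simp: eventually_ae_filter)
  then show "\<exists>N. negligible N \<and> {x\<in>S. \<not> P x} \<subseteq> N"
    using assms by (auto simp: null_sets_restrict_space space_restrict_space negligible_iff_null_sets)
next
  assume "\<exists>N. negligible N \<and> {x\<in>S. \<not> P x} \<subseteq> N"
  then obtain N where N: "negligible N" "{x\<in>S. \<not> P x} \<subseteq> N" by blast
  have "negligible (N \<inter> S)" using N(1) negligible_subset by blast
  then have "N \<inter> S \<in> null_sets (lebesgue_on S)"
    using assms by (auto simp: null_sets_restrict_space negligible_iff_null_sets)
  moreover have "{x \<in> space (lebesgue_on S). \<not> P x} \<subseteq> N \<inter> S"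
    using N(2) by (auto simp: space_restrict_space)
  ultimately show "AE x in lebesgue_on S. P x"
    unfolding eventually_ae_filter by blast
qed

lemma ae_reflect:
  fixes r :: real
  assumes "AE x in lebesgue_on {0..r}. P x"
  shows "AE x in lebesgue_on {0..r}. P (r - x)"
proof -
  obtain N where N: "negligible N" "{x\<in>{0..r}. \<not> P x} \<subseteq> N"
  proof -
    have "{0..r::real} \<in> sets lebesgue" by simp
    then show ?thesis using assms ae_iff_negl[of "{0..r}" P] that by blast
  qed
  have "(\<lambda>x::real. r - x) differentiable_on N"
    by (intro derivative_intros)
  then have "negligible ((\<lambda>x::real. r - x) ` N)"
    using N(1) by (intro negligible_differentiable_image_negligible) auto
  moreover have "{x\<in>{0..r}. \<not> P (r - x)} \<subseteq> (\<lambda>x::real. r - x) ` N"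
  proof
    fix x assume "x \<in> {x\<in>{0..r}. \<not> P (r - x)}"
    then have "r - x \<in> N" using N(2) by auto
    then show "x \<in> (\<lambda>x::real. r - x) ` N" using image_eqI[where x="r-x" and A=N and f="(-) r" and b=x] by simp
  qed
  ultimately have "\<exists>N. negligible N \<and> {x\<in>{0..r}. \<not> P (r - x)} \<subseteq> N" by blast
  moreover have "{0..r::real} \<in> sets lebesgue" by simp
  ultimately show ?thesis using ae_iff_negl[of "{0..r}" "\<lambda>x. P (r - x)"] by blast
qed

lemma ae_sub:
  assumes "AE x in lebesgue_on {a..b}. P x" "{c..d} \<subseteq> {a..b}"
  shows "AE x in lebesgue_on {c..d::real}. P x"
proof -
  have s1: "{a..b::real} \<in> sets lebesgue" "{c..d::real} \<in> sets lebesgue" by simp_all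
  obtain N where N: "negligible N" "{x\<in>{a..b}. \<not> P x} \<subseteq> N"
    using assms(1) ae_iff_negl[OF s1(1), of P] by blast
  have "{x\<in>{c..d}. \<not> P x} \<subseteq> N" using N(2) assms(2) by blast
  then show ?thesis using N(1) ae_iff_negl[OF s1(2), of P] by blast
qed

lemma ae_pt: "AE x in lebesgue_on {a..b::real}. x \<noteq> c"
proof -
  have s1: "{a..b::real} \<in> sets lebesgue" by simp
  have "negligible {c}" by simp
  moreover have "{x\<in>{a..b}. \<not> x \<noteq> c} \<subseteq> {c}" by blast
  ultimately show ?thesis using ae_iff_negl[OF s1, of "\<lambda>x. x \<noteq> c"] by blast
qed



lemma aux_lin: "x = xa + i \<Longrightarrow> y = ya + j \<Longrightarrow> k = i - j \<Longrightarrow> x - y = xa - ya + (k::real)"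
  by simp

lemma W2n1_diff:
  assumes "W2n1 n a b D" "W2n1 n a b E"
  shows "W2n1 n a b (\<lambda>k t. D k t - E k t)"
proof -
  note WD = assms(1)[unfolded W2n1_def] and WE = assms(2)[unfolded W2n1_def]
  note dD = WD[THEN conjunct1, rule_format] and iD = WD[THEN conjunct2, THEN conjunct1]
    and fD = WD[THEN conjunct2, THEN conjunct2, rule_format]
  note dE = WE[THEN conjunct1, rule_format] and iE = WE[THEN conjunct2, THEN conjunct1]
    and fE = WE[THEN conjunct2, THEN conjunct2, rule_format]
  have h1: "\<forall>k<2*n-1. \<forall>t\<in>{a..b}. ((\<lambda>t. D k t - E k t) has_real_derivative D (Suc k) t - E (Suc k) t) (at t within {a..b})"
  proof (intro allI impI ballI)
    fix k t assume k: "k < 2*n-1" and t: "t \<in> {a..b}"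
    show "((\<lambda>t. D k t - E k t) has_real_derivative D (Suc k) t - E (Suc k) t) (at t within {a..b})"
      using dD[OF k t] dE[OF k t] by (rule DERIV_diff)
  qed
  have h2: "integrable (lebesgue_on {a..b}) (\<lambda>t. D (2*n) t - E (2*n) t)"
    using iD iE by (rule Bochner_Integration.integrable_diff)
  have h3: "\<forall>t\<in>{a..b}. D (2 * n - 1) t - E (2 * n - 1) t =
           D (2 * n - 1) a - E (2 * n - 1) a + integral\<^sup>L (lebesgue_on {a..t}) (\<lambda>t. D (2 * n) t - E (2 * n) t)"
  proof
    fix t assume t: "t \<in> {a..b}"
    have "{a..t} \<subseteq> {a..b}" using t by auto
    then have iD': "integrable (lebesgue_on {a..t}) (D (2*n))" and iE': "integrable (lebesgue_on {a..t}) (E (2*n))"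
      by (rule integrable_subinterval[OF iD], rule integrable_subinterval[OF iE])
    show "D (2 * n - 1) t - E (2 * n - 1) t =
           D (2 * n - 1) a - E (2 * n - 1) a + integral\<^sup>L (lebesgue_on {a..t}) (\<lambda>t. D (2 * n) t - E (2 * n) t)"
      by (rule aux_lin[OF fD[OF t] fE[OF t] Bochner_Integration.integral_diff[OF iD' iE']])
  qed
  show ?thesis unfolding W2n1_def by (intro conjI h1 h2 h3)
qed

lemma solves_unique:
  assumes nr: "nonresonant n a b c BC"
  and lin: "\<And>D E. BC D \<Longrightarrow> BC E \<Longrightarrow> BC (\<lambda>k t. D k t - E k t)"
  and su: "solves n a b c BC u \<sigma>" and sv: "solves n a b c BC v \<sigma>"
  shows "\<forall>t\<in>{a..b}. u t = v t"
proof -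
  obtain D where D: "\<forall>t\<in>{a..b}. D 0 t = u t" "W2n1 n a b D" "BC D"
    "AE t in lebesgue_on {a..b}. D (2*n) t + (\<Sum>k<2*n. c k t * D k t) = \<sigma> t"
    using su unfolding solves_def by blast
  obtain E where E: "\<forall>t\<in>{a..b}. E 0 t = v t" "W2n1 n a b E" "BC E"
    "AE t in lebesgue_on {a..b}. E (2*n) t + (\<Sum>k<2*n. c k t * E k t) = \<sigma> t"
    using sv unfolding solves_def by blast
  have "solves n a b c BC (\<lambda>t. u t - v t) (\<lambda>_. 0)"
    unfolding solves_def
  proof (intro exI[of _ "\<lambda>k t. D k t - E k t"] conjI)
    show "\<forall>t\<in>{a..b}. D 0 t - E 0 t = u t - v t" using D E by auto
    show "W2n1 n a b (\<lambda>k t. D k t - E k t)" using W2n1_diff D E by blast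
    show "BC (\<lambda>k t. D k t - E k t)" using lin D E by blast
    show "AE t in lebesgue_on {a..b}. D (2*n) t - E (2*n) t + (\<Sum>k<2*n. c k t * (D k t - E k t)) = 0"
      using D(4) E(4)
    proof eventually_elim
      case (elim t)
      have "(\<Sum>k<2*n. c k t * (D k t - E k t)) = (\<Sum>k<2*n. c k t * D k t) - (\<Sum>k<2*n. c k t * E k t)"
        by (simp add: right_diff_distrib sum_subtractf)
      then show ?case using elim by linarith
    qed
  qed
  then have "\<forall>t\<in>{a..b}. (\<lambda>t. u t - v t) t = 0"
    using nr unfolding nonresonant_def by blast
  then show ?thesis by simp
qed

lemma deriv_agree:
  fixes f g :: "real \<Rightarrow> real"
  assumes ab: "a < b" and x: "x \<in> {a..b}" and eq: "\<forall>t\<in>{a..b}. f t = g t"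
    and df: "(f has_real_derivative f') (at x within {a..b})"
    and dg: "(g has_real_derivative g') (at x within {a..b})"
  shows "f' = g'"
proof -
  have "(g has_real_derivative f') (at x within {a..b})"
    using has_field_derivative_transform_within[OF df zero_less_one x] eq by auto
  then have v1: "(g has_vector_derivative f') (at x within cbox a b)"
    by (simp add: has_real_derivative_iff_has_vector_derivative)
  have v2: "(g has_vector_derivative g') (at x within cbox a b)"
    using dg by (simp add: has_real_derivative_iff_has_vector_derivative)
  have x': "x \<in> cbox a b" using x by simp
  show ?thesis by (rule vector_derivative_unique_within_closed_interval[OF ab x' v1 v2])
qed



lemma space_lon[simp]: "space (lebesgue_on S) = S"
  by (simp add: space_restrict_space)

lemma integrable_eq_on:
  assumes "integrable (lebesgue_on S) f" "\<And>x. x \<in> S \<Longrightarrow> f x = g x"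
  shows "integrable (lebesgue_on S) g"
proof -
  have "integrable (lebesgue_on S) f = integrable (lebesgue_on S) g"
    by (rule Bochner_Integration.integrable_cong) (auto simp: assms(2))
  then show ?thesis using assms(1) by simp
qed

lemma integral_eq_on:
  assumes "\<And>x. x \<in> S \<Longrightarrow> f x = g x"
  shows "integral\<^sup>L (lebesgue_on S) f = integral\<^sup>L (lebesgue_on S) g"
  by (rule Bochner_Integration.integral_cong) (auto simp: assms)

lemma spike_pt:
  fixes f g :: "real \<Rightarrow> real"
  assumes f: "integrable (lebesgue_on {a..b}) f" and eq: "\<And>x. x \<in> {a..b} \<Longrightarrow> x \<noteq> c \<Longrightarrow> g x = f x"
  shows "integrable (lebesgue_on {a..b}) g \<and> integral\<^sup>L (lebesgue_on {a..b}) g = integral\<^sup>L (lebesgue_on {a..b}) f"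
proof -
  have S: "{a..b} \<in> sets lebesgue" by simp
  have fa: "f absolutely_integrable_on {a..b}" using f int_iff_abs[OF S] by blast
  have eq': "\<And>x. x \<in> {a..b} - {c} \<Longrightarrow> g x = f x" using eq by blast
  have ga: "g absolutely_integrable_on {a..b}"
    using absolutely_integrable_spike[OF fa, of "{c}" g] eq' by simp
  have g: "integrable (lebesgue_on {a..b}) g" using ga int_iff_abs[OF S] by blast
  have "integral {a..b} f = integral {a..b} g"
    using integral_spike[where S="{c}" and T="{a..b}" and f=f and g=g] eq' by simp
  then show ?thesis using g lebesgue_integral_eq_integral[OF g S] lebesgue_integral_eq_integral[OF f S] by simp
qed

lemma cont_mult_integrable:
  fixes g \<sigma> :: "real \<Rightarrow> real"
  assumes g: "continuous_on {a..b} g" and s: "integrable (lebesgue_on {a..b}) \<sigma>"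
  shows "integrable (lebesgue_on {a..b}) (\<lambda>x. g x * \<sigma> x)"
proof -
  have S: "{a..b} \<in> sets lebesgue" by simp
  have m: "g \<in> borel_measurable (lebesgue_on {a..b})"
    by (rule continuous_imp_measurable_on_sets_lebesgue[OF g S])
  have bd: "bounded (g ` {a..b})"
    by (rule compact_imp_bounded, rule compact_continuous_image[OF g]) simp
  have "\<sigma> absolutely_integrable_on {a..b}" using s int_iff_abs[OF S] by blast
  then have "(\<lambda>x. g x * \<sigma> x) absolutely_integrable_on {a..b}"
    by (rule absolutely_integrable_bounded_measurable_product_real[OF m S bd])
  then show ?thesis using int_iff_abs[OF S] by blast
qed

lemma ae_in: "AE x in lebesgue_on {a..b::real}. x \<in> {a..b}"
proof -
  have s1: "{a..b::real} \<in> sets lebesgue" by simp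
  have "negligible ({}::real set)" by simp
  moreover have "{x\<in>{a..b}. \<not> x \<in> {a..b}} \<subseteq> {}" by blast
  ultimately show ?thesis using ae_iff_negl[OF s1, of "\<lambda>x. x \<in> {a..b}"] by blast
qed

lemma cont_slice:
  assumes "continuous_on ({a..b} \<times> {a..b}) (\<lambda>(t, s). G t s)" "t \<in> {a..b}"
    and "continuous_on S h" "h ` S \<subseteq> {a..b}"
  shows "continuous_on S (\<lambda>s. G t (h s))"
proof -
  have "continuous_on S (\<lambda>s. (t, h s))" using assms(3) by (intro continuous_intros)
  moreover have "(\<lambda>s. (t, h s)) ` S \<subseteq> {a..b} \<times> {a..b}" using assms(2,4) by auto
  ultimately have "continuous_on S (\<lambda>s. (\<lambda>(t, s). G t s) (t, h s))"
    using continuous_on_compose2[OF assms(1)] by blast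
  then show ?thesis by simp
qed

lemma reflect_img: "(\<lambda>t. r - t) ` {0..r} = {0..(r::real)}"
proof
  show "(\<lambda>t. r - t) ` {0..r} \<subseteq> {0..r}" by auto
  show "{0..r} \<subseteq> (\<lambda>t. r - t) ` {0..r}"
  proof
    fix x assume "x \<in> {0..r}"
    then show "x \<in> (\<lambda>t. r - t) ` {0..r}" using image_eqI[where x="r-x" and A="{0..r}" and f="\<lambda>t. r - t" and b=x] by simp
  qed
qed

lemma zero_from_cont:
  fixes G1 G2 :: "real \<Rightarrow> real"
  assumes T: "0 < T" and c1: "continuous_on {0..T} G1" and c2: "continuous_on {0..T} G2"
    and eq: "\<And>\<sigma>. integrable (lebesgue_on {0..T}) \<sigma> \<Longrightarrow>
       integral\<^sup>L (lebesgue_on {0..T}) (\<lambda>s. G1 s * \<sigma> s) = integral\<^sup>L (lebesgue_on {0..T}) (\<lambda>s. G2 s * \<sigma> s)"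
    and x: "x \<in> {0..T}"
  shows "G1 x = G2 x"
proof -
  define h where "h s = G1 s - G2 s" for s
  have ch: "continuous_on {0..T} h" unfolding h_def using c1 c2 by (intro continuous_intros)
  have S: "{0..T} \<in> sets lebesgue" by simp
  have ih: "integrable (lebesgue_on {0..T}) h"
    using absolutely_integrable_continuous_real[OF ch] int_iff_abs[OF S] by blast
  have i1: "integrable (lebesgue_on {0..T}) (\<lambda>s. G1 s * h s)" by (rule cont_mult_integrable[OF c1 ih])
  have i2: "integrable (lebesgue_on {0..T}) (\<lambda>s. G2 s * h s)" by (rule cont_mult_integrable[OF c2 ih])
  have "integral\<^sup>L (lebesgue_on {0..T}) (\<lambda>s. h s * h s) =
        integral\<^sup>L (lebesgue_on {0..T}) (\<lambda>s. G1 s * h s - G2 s * h s)"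
    by (rule integral_eq_on) (simp add: h_def algebra_simps)
  also have "\<dots> = 0" using Bochner_Integration.integral_diff[OF i1 i2] eq[OF ih] by simp
  finally have z: "integral\<^sup>L (lebesgue_on {0..T}) (\<lambda>s. h s * h s) = 0" .
  have chh: "continuous_on {0..T} (\<lambda>s. h s * h s)" using ch by (intro continuous_intros)
  have ihh: "integrable (lebesgue_on {0..T}) (\<lambda>s. h s * h s)" by (rule cont_mult_integrable[OF ch ih])
  have "((\<lambda>s. h s * h s) has_integral 0) {0..T}"
    using has_integral_integral_lebesgue_on[OF ihh S] z by simp
  then have "((\<lambda>s. h s * h s) has_integral 0) (cbox 0 T)" by simp
  moreover have "continuous_on (cbox 0 T) (\<lambda>s. h s * h s)" using chh by simp
  moreover have "box 0 T \<noteq> {}" using T by simp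
  moreover have "x \<in> cbox 0 T" using x by simp
  ultimately have "h x * h x = 0"
    using has_integral_0_cbox_imp_0[of 0 T "\<lambda>s. h s * h s" x] by simp
  then show ?thesis unfolding h_def by simp
qed



lemma aux_refl: "x = x0 + j1 \<Longrightarrow> y = x0 + jr \<Longrightarrow> jr = j1 + j2 \<Longrightarrow> i = e * j2 \<Longrightarrow>
   e * (-1) * x = e * (-1) * y + (i::real)"
  by (simp add: algebra_simps)

lemma pow_odd_n: "n \<ge> 1 \<Longrightarrow> (-1::real) ^ (2*n - 1) = -1"
proof -
  assume "n \<ge> 1"
  then have "2*n - 1 = Suc (2*(n-1))" by simp
  then show ?thesis by simp
qed

lemma W2n1_reflect:
  assumes W: "W2n1 n 0 r D" and n: "n \<ge> 1" and r: "0 \<le> r"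
  shows "W2n1 n 0 r (\<lambda>k t. e * (-1)^k * D k (r - t))"
proof -
  note WD = W[unfolded W2n1_def]
  note dD = WD[THEN conjunct1, rule_format] and iD = WD[THEN conjunct2, THEN conjunct1]
    and fD = WD[THEN conjunct2, THEN conjunct2, rule_format]
  have p1: "(-1::real) ^ (2*n - 1) = -1" using pow_odd_n[OF n] .
  have p2: "(-1::real) ^ (2*n) = 1" by simp
  have h1: "\<forall>k<2*n-1. \<forall>t\<in>{0..r}. ((\<lambda>t. e * (-1)^k * D k (r - t)) has_real_derivative
              e * (-1)^(Suc k) * D (Suc k) (r - t)) (at t within {0..r})"
  proof (intro allI impI ballI)
    fix k t assume k: "k < 2*n-1" and t: "t \<in> {0..r}"
    have rt: "r - t \<in> {0..r}" using t by auto
    have dk: "(D k has_real_derivative D (Suc k) (r - t)) (at (r - t) within (\<lambda>t. r - t) ` {0..r})"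
      using dD[OF k rt] by (simp add: reflect_img)
    have dg: "((\<lambda>t. r - t) has_real_derivative (0 - 1)) (at t within {0..r})"
      by (rule DERIV_diff[OF DERIV_const DERIV_ident])
    have "(D k \<circ> (\<lambda>t. r - t) has_real_derivative D (Suc k) (r - t) * (0 - 1)) (at t within {0..r})"
      by (rule DERIV_image_chain[OF dk dg])
    then have "((\<lambda>t. e * (-1)^k * (D k \<circ> (\<lambda>t. r - t)) t) has_real_derivative
                 e * (-1)^k * (D (Suc k) (r - t) * (0 - 1))) (at t within {0..r})"
      by (rule DERIV_cmult)
    moreover have "(\<lambda>t. e * (-1)^k * (D k \<circ> (\<lambda>t. r - t)) t) = (\<lambda>t. e * (-1)^k * D k (r - t))"
      by (simp add: o_def)
    ultimately have "((\<lambda>t. e * (-1)^k * D k (r - t)) has_real_derivative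
                 e * (-1)^k * (D (Suc k) (r - t) * (0 - 1))) (at t within {0..r})" by simp
    then show "((\<lambda>t. e * (-1)^k * D k (r - t)) has_real_derivative
              e * (-1)^(Suc k) * D (Suc k) (r - t)) (at t within {0..r})"
      by (rule DERIV_cong) simp
  qed
  have ir: "integrable (lebesgue_on {0..r}) (\<lambda>t. D (2*n) (r - t))"
    using integrable_reflect_r[OF iD, of r] by simp
  have h2: "integrable (lebesgue_on {0..r}) (\<lambda>t. e * (-1)^(2*n) * D (2*n) (r - t))"
    using ir by (rule integrable_mult_right)
  have h3: "\<forall>t\<in>{0..r}. e * (-1)^(2*n-1) * D (2*n-1) (r - t) =
      e * (-1)^(2*n-1) * D (2*n-1) (r - 0) +
      integral\<^sup>L (lebesgue_on {0..t}) (\<lambda>t. e * (-1)^(2*n) * D (2*n) (r - t))"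
  proof
    fix t assume t: "t \<in> {0..r}"
    have rt: "r - t \<in> {0..r}" using t by auto
    have rr: "r \<in> {0..r}" using r by auto
    have e1: "D (2*n-1) (r - t) = D (2*n-1) 0 + integral\<^sup>L (lebesgue_on {0..r - t}) (D (2*n))"
      by (rule fD[OF rt])
    have e2: "D (2*n-1) r = D (2*n-1) 0 + integral\<^sup>L (lebesgue_on {0..r}) (D (2*n))"
      by (rule fD[OF rr])
    have e3: "integral\<^sup>L (lebesgue_on {0..r}) (D (2*n)) =
       integral\<^sup>L (lebesgue_on {0..r-t}) (D (2*n)) + integral\<^sup>L (lebesgue_on {r-t..r}) (D (2*n))"
      using t by (intro integral_combine[OF iD]) auto
    have "integral\<^sup>L (lebesgue_on {r - r..r - (r - t)}) (\<lambda>x. D (2*n) (r - x)) =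
          integral\<^sup>L (lebesgue_on {r-t..r}) (D (2*n))"
      by (rule integral_reflect_r)
    then have e4': "integral\<^sup>L (lebesgue_on {0..t}) (\<lambda>x. D (2*n) (r - x)) =
          integral\<^sup>L (lebesgue_on {r-t..r}) (D (2*n))" by simp
    have e4: "integral\<^sup>L (lebesgue_on {0..t}) (\<lambda>t. e * (-1)^(2*n) * D (2*n) (r - t)) =
          e * integral\<^sup>L (lebesgue_on {r-t..r}) (D (2*n))"
      unfolding p2 using e4' by simp
    show "e * (-1)^(2*n-1) * D (2*n-1) (r - t) =
      e * (-1)^(2*n-1) * D (2*n-1) (r - 0) +
      integral\<^sup>L (lebesgue_on {0..t}) (\<lambda>t. e * (-1)^(2*n) * D (2*n) (r - t))"
      unfolding p1 diff_zero by (rule aux_refl[OF e1 e2 e3 e4])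
  qed
  have eqs: "(\<lambda>k t. e * (-1)^k * D k (r - t)) (2*n-1) = (\<lambda>t. e * (-1)^(2*n-1) * D (2*n-1) (r - t))"
    by simp
  show ?thesis unfolding W2n1_def
    apply (intro conjI)
    using h1 apply simp
    using h2 apply simp
    using h3 apply simp
    done
qed

lemma W2n1_sub:
  assumes W: "W2n1 n 0 b D" and c: "0 \<le> c" "c \<le> b"
  shows "W2n1 n 0 c D"
proof -
  note WD = W[unfolded W2n1_def]
  note dD = WD[THEN conjunct1, rule_format] and iD = WD[THEN conjunct2, THEN conjunct1]
    and fD = WD[THEN conjunct2, THEN conjunct2, rule_format]
  have sub: "{0..c} \<subseteq> {0..b}" using c by auto
  have h1: "\<forall>k<2*n-1. \<forall>t\<in>{0..c}. (D k has_real_derivative D (Suc k) t) (at t within {0..c})"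
  proof (intro allI impI ballI)
    fix k t assume k: "k < 2*n-1" and t: "t \<in> {0..c}"
    have "t \<in> {0..b}" using t sub by blast
    from has_field_derivative_subset[OF dD[OF k this] sub]
    show "(D k has_real_derivative D (Suc k) t) (at t within {0..c})" .
  qed
  have h2: "integrable (lebesgue_on {0..c}) (D (2*n))" by (rule integrable_subinterval[OF iD sub])
  have h3: "\<forall>t\<in>{0..c}. D (2*n - 1) t = D (2*n - 1) 0 + integral\<^sup>L (lebesgue_on {0..t}) (D (2*n))"
    using fD sub by blast
  show ?thesis unfolding W2n1_def by (intro conjI h1 h2 h3)
qed



lemma ext_sym:
  assumes t: "t \<in> {0..2*T}" "t \<noteq> T"
  shows "ext_coef T a k t * (-1)^k = ext_coef T a k (2*T - t)"
proof (cases "t < T")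
  case True
  then show ?thesis by (cases "even k") (auto simp: ext_coef_def)
next
  case False
  then have "t > T" using t by auto
  then show ?thesis by (cases "even k") (auto simp: ext_coef_def)
qed

lemma st_sym:
  fixes T :: real
  assumes e: "\<epsilon> * \<epsilon> = (1::real)" and t: "t \<in> {0..2*T}" "t \<noteq> T"
  shows "\<epsilon> * (if 2*T - t \<le> T then \<sigma> (2*T - t) else \<epsilon> * \<sigma> (2*T - (2*T - t))) =
         (if t \<le> T then \<sigma> t else \<epsilon> * \<sigma> (2*T - t))"
proof (cases "t < T")
  case True
  then have "\<not> 2*T - t \<le> T" by auto
  then show ?thesis using True e by (simp add: mult.assoc[symmetric])
next
  case False
  then have "t > T" using t by auto
  then show ?thesis by auto
qed

lemma st_int:
  fixes \<sigma> :: "real \<Rightarrow> real"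
  assumes T: "T > 0" and s: "integrable (lebesgue_on {0..T}) \<sigma>"
  shows "integrable (lebesgue_on {0..2*T}) (\<lambda>t. if t \<le> T then \<sigma> t else \<epsilon> * \<sigma> (2*T - t))"
    (is "integrable _ ?st")
proof -
  have i1: "integrable (lebesgue_on {0..T}) ?st"
    by (rule integrable_eq_on[OF s]) auto
  have "integrable (lebesgue_on {2*T - T..2*T - 0}) (\<lambda>x. \<sigma> (2*T - x))"
    by (rule integrable_reflect_r[OF s])
  moreover have "{2*T - T..2*T - 0} = {T..2*T}" by auto
  ultimately have "integrable (lebesgue_on {T..2*T}) (\<lambda>x. \<sigma> (2*T - x))" by simp
  then have i2r: "integrable (lebesgue_on {T..2*T}) (\<lambda>x. \<epsilon> * \<sigma> (2*T - x))"
    by (rule integrable_mult_right)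
  have i2: "integrable (lebesgue_on {T..2*T}) ?st"
    using spike_pt[OF i2r, of T ?st] by auto
  have S1: "{0..T} \<in> sets lebesgue" and S2: "{T..2*T} \<in> sets lebesgue" and S3: "{0..2*T} \<in> sets lebesgue"
    by simp_all
  have "?st absolutely_integrable_on ({0..T} \<union> {T..2*T})"
    using absolutely_integrable_Un i1 i2 int_iff_abs[OF S1] int_iff_abs[OF S2] by blast
  moreover have "{0..T} \<union> {T..2*T} = {0..2*T}" using T by auto
  ultimately show ?thesis using int_iff_abs[OF S3] by simp
qed

lemma rep:
  fixes \<sigma> :: "real \<Rightarrow> real"
  assumes T: "T > 0" and cG: "continuous_on ({0..2*T} \<times> {0..2*T}) (\<lambda>(t, s). GP t s)"
    and t: "t \<in> {0..2*T}" and s: "integrable (lebesgue_on {0..T}) \<sigma>"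
  shows "integral\<^sup>L (lebesgue_on {0..2*T}) (\<lambda>s. GP t s * (if s \<le> T then \<sigma> s else \<epsilon> * \<sigma> (2*T - s))) =
         integral\<^sup>L (lebesgue_on {0..T}) (\<lambda>s. (GP t s + \<epsilon> * GP t (2*T - s)) * \<sigma> s)"
proof -
  define st where "st = (\<lambda>s. if s \<le> T then \<sigma> s else \<epsilon> * \<sigma> (2*T - s))"
  have cg: "continuous_on {0..2*T} (\<lambda>s. GP t s)"
    using cont_slice[OF cG t, of "{0..2*T}" "\<lambda>s. s"] by simp
  have ist: "integrable (lebesgue_on {0..2*T}) st" unfolding st_def by (rule st_int[OF T s])
  have i: "integrable (lebesgue_on {0..2*T}) (\<lambda>s. GP t s * st s)" by (rule cont_mult_integrable[OF cg ist])
  have split: "integral\<^sup>L (lebesgue_on {0..2*T}) (\<lambda>s. GP t s * st s) =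
      integral\<^sup>L (lebesgue_on {0..T}) (\<lambda>s. GP t s * st s) + integral\<^sup>L (lebesgue_on {T..2*T}) (\<lambda>s. GP t s * st s)"
    using T by (intro integral_combine[OF i]) auto
  have A: "integral\<^sup>L (lebesgue_on {0..T}) (\<lambda>s. GP t s * st s) = integral\<^sup>L (lebesgue_on {0..T}) (\<lambda>s. GP t s * \<sigma> s)"
    by (rule integral_eq_on) (auto simp: st_def)
  have "integrable (lebesgue_on {2*T - T..2*T - 0}) (\<lambda>x. \<sigma> (2*T - x))"
    by (rule integrable_reflect_r[OF s])
  moreover have "{2*T - T..2*T - 0} = {T..2*T}" by auto
  ultimately have "integrable (lebesgue_on {T..2*T}) (\<lambda>x. \<sigma> (2*T - x))" by simp
  then have i2r: "integrable (lebesgue_on {T..2*T}) (\<lambda>x. \<epsilon> * \<sigma> (2*T - x))"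
    by (rule integrable_mult_right)
  have cg2: "continuous_on {T..2*T} (\<lambda>s. GP t s)"
    by (rule continuous_on_subset[OF cg]) (use T in auto)
  have i2: "integrable (lebesgue_on {T..2*T}) (\<lambda>s. GP t s * (\<epsilon> * \<sigma> (2*T - s)))"
    by (rule cont_mult_integrable[OF cg2 i2r])
  have B: "integral\<^sup>L (lebesgue_on {T..2*T}) (\<lambda>s. GP t s * st s) =
           integral\<^sup>L (lebesgue_on {T..2*T}) (\<lambda>s. GP t s * (\<epsilon> * \<sigma> (2*T - s)))"
    using spike_pt[OF i2, of T "\<lambda>s. GP t s * st s"] by (auto simp: st_def)
  have "integral\<^sup>L (lebesgue_on {2*T - 2*T..2*T - T}) (\<lambda>x. GP t (2*T - x) * (\<epsilon> * \<sigma> (2*T - (2*T - x)))) =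
        integral\<^sup>L (lebesgue_on {T..2*T}) (\<lambda>s. GP t s * (\<epsilon> * \<sigma> (2*T - s)))"
    by (rule integral_reflect_r)
  moreover have "{2*T - 2*T..2*T - T} = {0..T}" by auto
  ultimately have C0: "integral\<^sup>L (lebesgue_on {0..T}) (\<lambda>x. GP t (2*T - x) * (\<epsilon> * \<sigma> (2*T - (2*T - x)))) =
        integral\<^sup>L (lebesgue_on {T..2*T}) (\<lambda>s. GP t s * (\<epsilon> * \<sigma> (2*T - s)))" by simp
  have C1: "integral\<^sup>L (lebesgue_on {0..T}) (\<lambda>x. GP t (2*T - x) * (\<epsilon> * \<sigma> (2*T - (2*T - x)))) =
        integral\<^sup>L (lebesgue_on {0..T}) (\<lambda>x. (\<epsilon> * GP t (2*T - x)) * \<sigma> x)"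
    by (rule integral_eq_on) simp
  have cg1: "continuous_on {0..T} (\<lambda>s. GP t s)"
    by (rule continuous_on_subset[OF cg]) (use T in auto)
  have cg3: "continuous_on {0..T} (\<lambda>s. GP t (2*T - s))"
    by (rule cont_slice[OF cG t]) (auto intro!: continuous_intros)
  have cg3': "continuous_on {0..T} (\<lambda>s. \<epsilon> * GP t (2*T - s))"
    using cg3 by (intro continuous_intros)
  have j1: "integrable (lebesgue_on {0..T}) (\<lambda>s. GP t s * \<sigma> s)" by (rule cont_mult_integrable[OF cg1 s])
  have j2: "integrable (lebesgue_on {0..T}) (\<lambda>s. (\<epsilon> * GP t (2*T - s)) * \<sigma> s)" by (rule cont_mult_integrable[OF cg3' s])
  have D: "integral\<^sup>L (lebesgue_on {0..T}) (\<lambda>s. (GP t s + \<epsilon> * GP t (2*T - s)) * \<sigma> s) =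
     integral\<^sup>L (lebesgue_on {0..T}) (\<lambda>s. GP t s * \<sigma> s) + integral\<^sup>L (lebesgue_on {0..T}) (\<lambda>s. (\<epsilon> * GP t (2*T - s)) * \<sigma> s)"
    using Bochner_Integration.integral_add[OF j1 j2] by (simp add: distrib_right)
  have "integral\<^sup>L (lebesgue_on {0..2*T}) (\<lambda>s. GP t s * (if s \<le> T then \<sigma> s else \<epsilon> * \<sigma> (2*T - s)))
     = integral\<^sup>L (lebesgue_on {0..2*T}) (\<lambda>s. GP t s * st s)" by (simp add: st_def)
  also have "\<dots> = integral\<^sup>L (lebesgue_on {0..T}) (\<lambda>s. GP t s * \<sigma> s) +
       integral\<^sup>L (lebesgue_on {T..2*T}) (\<lambda>s. GP t s * (\<epsilon> * \<sigma> (2*T - s)))"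
    using split A B by simp
  also have "\<dots> = integral\<^sup>L (lebesgue_on {0..T}) (\<lambda>s. (GP t s + \<epsilon> * GP t (2*T - s)) * \<sigma> s)"
    using C0 C1 D by simp
  finally show ?thesis .
qed



lemma sym_sol:
  fixes \<sigma> :: "real \<Rightarrow> real"
  assumes n: "n \<ge> 1" and T: "T > 0"
    and gP: "green n 0 (2*T) (ext_coef T a) (BC_P n (2*T)) GP"
    and eps: "\<epsilon> * \<epsilon> = (1::real)" and s: "integrable (lebesgue_on {0..T}) \<sigma>"
  shows "\<exists>D. (\<forall>t\<in>{0..T}. D 0 t = integral\<^sup>L (lebesgue_on {0..2*T}) (\<lambda>s. GP t s * (if s \<le> T then \<sigma> s else \<epsilon> * \<sigma> (2*T - s))))
     \<and> W2n1 n 0 T D \<and> (\<forall>k<2*n. \<epsilon> * (-1)^k = -1 \<longrightarrow> D k 0 = 0 \<and> D k T = 0)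
     \<and> (AE t in lebesgue_on {0..T}. D (2*n) t + (\<Sum>k<2*n. a k t * D k t) = \<sigma> t)"
proof -
  define st where "st = (\<lambda>s. if s \<le> T then \<sigma> s else \<epsilon> * \<sigma> (2*T - s))"
  define u where "u = (\<lambda>t. integral\<^sup>L (lebesgue_on {0..2*T}) (\<lambda>s. GP t s * st s))"
  define c where "c = ext_coef T a"
  have ist: "integrable (lebesgue_on {0..2*T}) st" unfolding st_def by (rule st_int[OF T s])
  have nr: "nonresonant n 0 (2*T) c (BC_P n (2*T))" using gP unfolding green_def c_def by blast
  have "solves n 0 (2*T) c (BC_P n (2*T)) u st"
    using gP ist unfolding green_def c_def u_def by blast
  then obtain D where D0: "\<forall>t\<in>{0..2*T}. D 0 t = u t" and WD: "W2n1 n 0 (2*T) D"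
    and BCD: "BC_P n (2*T) D"
    and AED: "AE t in lebesgue_on {0..2*T}. D (2*n) t + (\<Sum>k<2*n. c k t * D k t) = st t"
    unfolding solves_def by blast
  define E where "E = (\<lambda>k t. \<epsilon> * (-1)^k * D k (2*T - t))"
  have WE: "W2n1 n 0 (2*T) E" unfolding E_def by (rule W2n1_reflect[OF WD n]) (use T in simp)
  have BCE: "BC_P n (2*T) E" using BCD unfolding BC_P_def E_def by simp
  have AEE: "AE t in lebesgue_on {0..2*T}. E (2*n) t + (\<Sum>k<2*n. c k t * E k t) = st t"
    using ae_reflect[OF AED] ae_pt[where a=0 and b="2*T" and c=T] ae_in[where a=0 and b="2*T"]
  proof eventually_elim
    case (elim t)
    then have h: "D (2*n) (2*T - t) + (\<Sum>k<2*n. c k (2*T - t) * D k (2*T - t)) = st (2*T - t)"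
      and tT: "t \<noteq> T" and t: "t \<in> {0..2*T}" by auto
    have sum: "(\<Sum>k<2*n. c k t * E k t) = \<epsilon> * (\<Sum>k<2*n. c k (2*T - t) * D k (2*T - t))"
      unfolding sum_distrib_left
    proof (rule sum.cong[OF refl])
      fix k
      have "c k t * (-1)^k = c k (2*T - t)" unfolding c_def by (rule ext_sym[OF t tT])
      then show "c k t * E k t = \<epsilon> * (c k (2*T - t) * D k (2*T - t))"
        unfolding E_def by (metis (no_types, lifting) mult.assoc mult.commute)
    qed
    have "E (2*n) t = \<epsilon> * D (2*n) (2*T - t)" unfolding E_def by simp
    then have "E (2*n) t + (\<Sum>k<2*n. c k t * E k t) =
       \<epsilon> * (D (2*n) (2*T - t) + (\<Sum>k<2*n. c k (2*T - t) * D k (2*T - t)))"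
      using sum by (simp add: distrib_left)
    also have "\<dots> = \<epsilon> * st (2*T - t)" by (simp only: h)
    also have "\<dots> = st t" unfolding st_def by (rule st_sym[OF eps t tT])
    finally show ?case .
  qed
  have sE: "solves n 0 (2*T) c (BC_P n (2*T)) (\<lambda>t. \<epsilon> * u (2*T - t)) st"
    unfolding solves_def
  proof (intro exI[of _ E] conjI)
    show "\<forall>t\<in>{0..2*T}. E 0 t = \<epsilon> * u (2*T - t)"
    proof
      fix t assume "t \<in> {0..2*T}"
      then have "2*T - t \<in> {0..2*T}" by auto
      then show "E 0 t = \<epsilon> * u (2*T - t)" using D0 unfolding E_def by simp
    qed
  qed (rule WE, rule BCE, rule AEE)
  have sD: "solves n 0 (2*T) c (BC_P n (2*T)) u st"
    unfolding solves_def using D0 WD BCD AED by blast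
  have linP: "\<And>D E. BC_P n (2*T) D \<Longrightarrow> BC_P n (2*T) E \<Longrightarrow> BC_P n (2*T) (\<lambda>k t. D k t - E k t)"
    unfolding BC_P_def by simp
  have uu: "\<forall>t\<in>{0..2*T}. u t = \<epsilon> * u (2*T - t)" by (rule solves_unique[OF nr linP sD sE])
  note WD' = WD[unfolded W2n1_def] and WE' = WE[unfolded W2n1_def]
  note dD = WD'[THEN conjunct1, rule_format] and dE = WE'[THEN conjunct1, rule_format]
  have T2: "0 < 2*T" using T by simp
  have eqDE: "\<forall>t\<in>{0..2*T}. D k t = E k t" if "k \<le> 2*n-1" for k
    using that
  proof (induction k)
    case 0
    show ?case
    proof
      fix t assume t: "t \<in> {0..2*T}"
      then have "2*T - t \<in> {0..2*T}" by auto
      then have a1: "D 0 (2*T - t) = u (2*T - t)" using D0 by blast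
      have a2: "D 0 t = u t" using D0 t by blast
      have a3: "u t = \<epsilon> * u (2*T - t)" using uu t by blast
      have a4: "E 0 t = \<epsilon> * D 0 (2*T - t)" unfolding E_def by simp
      show "D 0 t = E 0 t" using a1 a2 a3 a4 by simp
    qed
  next
    case (Suc k)
    then have k: "k < 2*n-1" by simp
    have IH: "\<forall>t\<in>{0..2*T}. D k t = E k t" using Suc by simp
    show ?case
    proof
      fix t assume t: "t \<in> {0..2*T}"
      show "D (Suc k) t = E (Suc k) t"
        by (rule deriv_agree[OF T2 t IH dD[OF k t] dE[OF k t]])
    qed
  qed
  have bnd: "\<forall>k<2*n. \<epsilon> * (-1)^k = -1 \<longrightarrow> D k 0 = 0 \<and> D k T = 0"
  proof (intro allI impI)
    fix k assume k: "k < 2*n" and ek: "\<epsilon> * (-1)^k = (-1::real)"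
    then have k': "k \<le> 2*n-1" by simp
    have TT: "T \<in> {0..2*T}" and OO: "0 \<in> {0..2*T}" using T by auto
    have "D k T = E k T" using eqDE[OF k'] TT by blast
    also have "\<dots> = - D k T" unfolding E_def using ek by simp
    finally have z1: "D k T = 0" by simp
    have "D k 0 = E k 0" using eqDE[OF k'] OO by blast
    also have "\<dots> = - D k (2*T)" unfolding E_def using ek by simp
    also have "\<dots> = - D k 0" using BCD k unfolding BC_P_def by simp
    finally have z0: "D k 0 = 0" by simp
    show "D k 0 = 0 \<and> D k T = 0" using z0 z1 by simp
  qed
  have WT: "W2n1 n 0 T D" by (rule W2n1_sub[OF WD]) (use T in auto)
  have subT: "{0..T} \<subseteq> {0..2*T}" using T by auto
  have AET: "AE t in lebesgue_on {0..T}. D (2*n) t + (\<Sum>k<2*n. a k t * D k t) = \<sigma> t"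
    using ae_sub[OF AED subT] ae_in[where a=0 and b=T]
  proof eventually_elim
    case (elim t)
    then have tT: "t \<le> T" by simp
    have "(\<Sum>k<2*n. a k t * D k t) = (\<Sum>k<2*n. c k t * D k t)"
      unfolding c_def ext_coef_def using tT by simp
    then show ?case using elim tT unfolding st_def by simp
  qed
  have "\<forall>t\<in>{0..T}. D 0 t = u t" using D0 T by auto
  then show ?thesis unfolding u_def st_def using WT bnd AET by blast
qed



lemma green_rel:
  fixes \<epsilon> :: real
  assumes n: "n \<ge> 1" and T: "T > 0"
    and gP: "green n 0 (2*T) (ext_coef T a) (BC_P n (2*T)) GP"
    and gX: "green n 0 T a BCX GX"
    and lin: "\<And>D E. BCX D \<Longrightarrow> BCX E \<Longrightarrow> BCX (\<lambda>k t. D k t - E k t)"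
    and bc: "\<And>D. \<forall>k<2*n. \<epsilon> * (-1)^k = -1 \<longrightarrow> D k 0 = 0 \<and> D k T = 0 \<Longrightarrow> BCX D"
    and eps: "\<epsilon> * \<epsilon> = 1"
    and t: "t \<in> {0..T}" and s: "s \<in> {0..T}"
  shows "GX t s = GP t s + \<epsilon> * GP t (2*T - s)"
proof -
  have cP: "continuous_on ({0..2*T} \<times> {0..2*T}) (\<lambda>(t, s). GP t s)" using gP unfolding green_def by blast
  have cX: "continuous_on ({0..T} \<times> {0..T}) (\<lambda>(t, s). GX t s)" using gX unfolding green_def by blast
  have nr: "nonresonant n 0 T a BCX" using gX unfolding green_def by blast
  have t2: "t \<in> {0..2*T}" using t T by auto
  have c1: "continuous_on {0..T} (\<lambda>s. GX t s)"
    using cont_slice[OF cX t, of "{0..T}" "\<lambda>s. s"] by simp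
  have c2a: "continuous_on {0..T} (\<lambda>s. GP t s)"
    using cont_slice[OF cP t2, of "{0..T}" "\<lambda>s. s"] T by auto
  have c2b: "continuous_on {0..T} (\<lambda>s. GP t (2*T - s))"
    by (rule cont_slice[OF cP t2]) (auto intro!: continuous_intros)
  have c2: "continuous_on {0..T} (\<lambda>s. GP t s + \<epsilon> * GP t (2*T - s))"
    using c2a c2b by (intro continuous_intros)
  show ?thesis
  proof (rule zero_from_cont[OF T c1 c2 _ s])
    fix \<sigma> :: "real \<Rightarrow> real" assume si: "integrable (lebesgue_on {0..T}) \<sigma>"
    define u where "u = (\<lambda>t. integral\<^sup>L (lebesgue_on {0..2*T}) (\<lambda>s. GP t s * (if s \<le> T then \<sigma> s else \<epsilon> * \<sigma> (2*T - s))))"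
    obtain D where D0: "\<forall>t\<in>{0..T}. D 0 t = u t" and WT: "W2n1 n 0 T D"
      and bnd: "\<forall>k<2*n. \<epsilon> * (-1)^k = -1 \<longrightarrow> D k 0 = 0 \<and> D k T = 0"
      and AET: "AE t in lebesgue_on {0..T}. D (2*n) t + (\<Sum>k<2*n. a k t * D k t) = \<sigma> t"
      using sym_sol[OF n T gP eps si] unfolding u_def by blast
    have su: "solves n 0 T a BCX u \<sigma>"
      unfolding solves_def using D0 WT bc[OF bnd] AET by blast
    have sw: "solves n 0 T a BCX (\<lambda>t. integral\<^sup>L (lebesgue_on {0..T}) (\<lambda>s. GX t s * \<sigma> s)) \<sigma>"
      using gX si unfolding green_def by blast
    have "\<forall>t\<in>{0..T}. integral\<^sup>L (lebesgue_on {0..T}) (\<lambda>s. GX t s * \<sigma> s) = u t"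
      by (rule solves_unique[OF nr lin sw su])
    then have "integral\<^sup>L (lebesgue_on {0..T}) (\<lambda>s. GX t s * \<sigma> s) = u t" using t by blast
    also have "\<dots> = integral\<^sup>L (lebesgue_on {0..T}) (\<lambda>s. (GP t s + \<epsilon> * GP t (2*T - s)) * \<sigma> s)"
      unfolding u_def by (rule rep[OF T cP t2 si])
    finally show "integral\<^sup>L (lebesgue_on {0..T}) (\<lambda>s. GX t s * \<sigma> s) =
       integral\<^sup>L (lebesgue_on {0..T}) (\<lambda>s. (GP t s + \<epsilon> * GP t (2*T - s)) * \<sigma> s)" .
  qed
qed

theorem corollary6p1:
  fixes n :: nat and T \<alpha> :: real and a :: "nat \<Rightarrow> real \<Rightarrow> real"
    and GP GN GD :: "real \<Rightarrow> real \<Rightarrow> real"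
  assumes "n \<ge> 1" and "T > 0" and "\<alpha> \<ge> 1"
    and "\<forall>k<2*n. Lp_on \<alpha> 0 T (a k)"
    and "green n 0 (2*T) (ext_coef T a) (BC_P n (2*T)) GP"
    and "green n 0 T a (BC_N n T) GN"
    and "green n 0 T a (BC_D n T) GD"
  shows "((\<forall>t\<in>{0..2*T}. \<forall>s\<in>{0..2*T}. GP t s \<ge> 0) \<longrightarrow>
            (\<forall>t\<in>{0..T}. \<forall>s\<in>{0..T}. GN t s \<ge> \<bar>GD t s\<bar>)) \<and>
         ((\<forall>t\<in>{0..2*T}. \<forall>s\<in>{0..2*T}. GP t s \<le> 0) \<longrightarrow>
            (\<forall>t\<in>{0..T}. \<forall>s\<in>{0..T}. GN t s \<le> - \<bar>GD t s\<bar>))"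
proof -
  have linN: "\<And>D E. BC_N n T D \<Longrightarrow> BC_N n T E \<Longrightarrow> BC_N n T (\<lambda>k t. D k t - E k t)"
    unfolding BC_N_def by simp
  have linD: "\<And>D E. BC_D n T D \<Longrightarrow> BC_D n T E \<Longrightarrow> BC_D n T (\<lambda>k t. D k t - E k t)"
    unfolding BC_D_def by simp
  have bcN: "BC_N n T D" if h: "\<forall>k<2*n. (1::real) * (-1)^k = -1 \<longrightarrow> D k 0 = 0 \<and> D k T = 0" for D
    unfolding BC_N_def
  proof (intro allI impI)
    fix k assume "k < n"
    then have "2*k+1 < 2*n" by simp
    moreover have "(1::real) * (-1)^(2*k+1) = -1" by simp
    ultimately show "D (2*k+1) 0 = 0 \<and> D (2*k+1) T = 0" using h by blast
  qed
  have bcD: "BC_D n T D" if h: "\<forall>k<2*n. (-1::real) * (-1)^k = -1 \<longrightarrow> D k 0 = 0 \<and> D k T = 0" for D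
    unfolding BC_D_def
  proof (intro allI impI)
    fix k assume "k < n"
    then have "2*k < 2*n" by simp
    moreover have "(-1::real) * (-1)^(2*k) = -1" by simp
    ultimately show "D (2*k) 0 = 0 \<and> D (2*k) T = 0" using h by blast
  qed
  have N: "GN t s = GP t s + 1 * GP t (2*T - s)" if "t \<in> {0..T}" "s \<in> {0..T}" for t s
    by (rule green_rel[OF assms(1,2,5,6) linN bcN _ that]) simp_all
  have D: "GD t s = GP t s + (-1) * GP t (2*T - s)" if "t \<in> {0..T}" "s \<in> {0..T}" for t s
    by (rule green_rel[OF assms(1,2,5,7) linD bcD _ that]) simp_all
  have mem: "t \<in> {0..2*T} \<and> s \<in> {0..2*T} \<and> 2*T - s \<in> {0..2*T}" if "t \<in> {0..T}" "s \<in> {0..T}" for t s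
    using that \<open>T > 0\<close> by auto
  show ?thesis
  proof (intro conjI impI ballI)
    fix t s assume P: "\<forall>t\<in>{0..2*T}. \<forall>s\<in>{0..2*T}. GP t s \<ge> 0" and t: "t \<in> {0..T}" and s: "s \<in> {0..T}"
    have "GP t s \<ge> 0" "GP t (2*T - s) \<ge> 0" using P mem[OF t s] by auto
    then show "GN t s \<ge> \<bar>GD t s\<bar>" using N[OF t s] D[OF t s] by simp
  next
    fix t s assume P: "\<forall>t\<in>{0..2*T}. \<forall>s\<in>{0..2*T}. GP t s \<le> 0" and t: "t \<in> {0..T}" and s: "s \<in> {0..T}"
    have "GP t s \<le> 0" "GP t (2*T - s) \<le> 0" using P mem[OF t s] by auto
    then show "GN t s \<le> - \<bar>GD t s\<bar>" using N[OF t s] D[OF t s] by simp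
  qed
qed


end
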